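(* Consider a generalized discrete preference game on a tree metric: a finite set $V$ of players, a directed graph on $V$ with nonnegative weights $w_{ij}$ on arcs $(i,j)$ (with $N_i$ the set of out-neighbours of $i$), a finite tree $\mathcal{T}$ with positive edge lengths whose node set $L$ is the strategy set and whose shortest-path metric is $d$, and for each player $i$ and node $v\in L$ a nonnegative penalty $p_i(v)$. The cost of player $i$ in profile $z=(z_i)_{i\in V}\in L^V$ is $c_i(z)=\sum_{v\in L} p_i(v)\, d(v,z_i)+\sum_{j\in N_i} w_{ij}\, d(z_i,z_j)$. Fix a root $r$ of $\mathcal{T}$ and run the following procedure (Tree Metric Algo): initially set $z_i\leftarrow r$ for every player $i$; while there exists a player $i$ and a child $v$ of $z_i$ (in $\mathcal{T}$ rooted at $r$) such that changing $z_i$ to $v$ (keeping all other strategies fixed) strictly decreases $c_i$, set $z_i\leftarrow v$ for some such pair. Then this procedure terminates (after at most $|V|\cdot|L|$ moves), and the final profile $z$ is a pure Nash equilibrium, i.e. no player can strictly decrease her cost by changing only her own strategy. In particular such a game always has a pure Nash equilibrium. *)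

theory Defs
  imports Complex_Main
begin

fun is_walk :: "('n \<times> 'n) set \<Rightarrow> 'n list \<Rightarrow> bool" where
  "is_walk E [] = False"
| "is_walk E [x] = True"
| "is_walk E (x # y # xs) = ((x, y) \<in> E \<and> is_walk E (y # xs))"

definition simple_path :: "('n \<times> 'n) set \<Rightarrow> 'n \<Rightarrow> 'n \<Rightarrow> 'n list \<Rightarrow> bool" where
  "simple_path E u v p \<longleftrightarrow> is_walk E p \<and> distinct p \<and> hd p = u \<and> last p = v"

definition weighted_tree :: "'n set \<Rightarrow> ('n \<times> 'n) set \<Rightarrow> ('n \<Rightarrow> 'n \<Rightarrow> real) \<Rightarrow> bool" where
  "weighted_tree L E len \<longleftrightarrow>
     finite L \<and> L \<noteq> {} \<and> E \<subseteq> L \<times> L \<and>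
     (\<forall>u v. (u, v) \<in> E \<longrightarrow> (v, u) \<in> E \<and> u \<noteq> v \<and> len u v > 0 \<and> len u v = len v u) \<and>
     (\<forall>u\<in>L. \<forall>v\<in>L. \<exists>!p. simple_path E u v p)"

fun path_length :: "('n \<Rightarrow> 'n \<Rightarrow> real) \<Rightarrow> 'n list \<Rightarrow> real" where
  "path_length len (x # y # xs) = len x y + path_length len (y # xs)"
| "path_length len _ = 0"

text \<open>Shortest-path metric of the tree (a shortest walk can always be taken simple).\<close>

definition tree_dist :: "('n \<times> 'n) set \<Rightarrow> ('n \<Rightarrow> 'n \<Rightarrow> real) \<Rightarrow> 'n \<Rightarrow> 'n \<Rightarrow> real" where
  "tree_dist E len u v = Min (path_length len ` {p. simple_path E u v p})"

definition tree_child :: "('n \<times> 'n) set \<Rightarrow> 'n \<Rightarrow> 'n \<Rightarrow> 'n \<Rightarrow> bool" where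
  "tree_child E r u v \<longleftrightarrow> (u, v) \<in> E \<and> (\<exists>p. simple_path E r v p \<and> u \<in> set p)"

definition game_cost ::
  "'n set \<Rightarrow> ('n \<times> 'n) set \<Rightarrow> ('n \<Rightarrow> 'n \<Rightarrow> real) \<Rightarrow> ('p \<times> 'p) set \<Rightarrow> ('p \<Rightarrow> 'p \<Rightarrow> real)
   \<Rightarrow> ('p \<Rightarrow> 'n \<Rightarrow> real) \<Rightarrow> 'p \<Rightarrow> ('p \<Rightarrow> 'n) \<Rightarrow> real" where
  "game_cost L E len A w pen i z =
     (\<Sum>v\<in>L. pen i v * tree_dist E len v (z i)) +
     (\<Sum>j\<in>{j. (i, j) \<in> A}. w i j * tree_dist E len (z i) (z j))"

definition algo_step ::
  "'p set \<Rightarrow> 'n set \<Rightarrow> ('n \<times> 'n) set \<Rightarrow> ('n \<Rightarrow> 'n \<Rightarrow> real) \<Rightarrow> ('p \<times> 'p) set \<Rightarrow> ('p \<Rightarrow> 'p \<Rightarrow> real)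
   \<Rightarrow> ('p \<Rightarrow> 'n \<Rightarrow> real) \<Rightarrow> 'n \<Rightarrow> ('p \<Rightarrow> 'n) \<Rightarrow> ('p \<Rightarrow> 'n) \<Rightarrow> bool" where
  "algo_step V L E len A w pen r z z' \<longleftrightarrow>
     (\<exists>i\<in>V. \<exists>v. tree_child E r (z i) v \<and>
        game_cost L E len A w pen i (z(i := v)) < game_cost L E len A w pen i z \<and>
        z' = z(i := v))"

definition pure_nash ::
  "'p set \<Rightarrow> 'n set \<Rightarrow> ('n \<times> 'n) set \<Rightarrow> ('n \<Rightarrow> 'n \<Rightarrow> real) \<Rightarrow> ('p \<times> 'p) set \<Rightarrow> ('p \<Rightarrow> 'p \<Rightarrow> real)
   \<Rightarrow> ('p \<Rightarrow> 'n \<Rightarrow> real) \<Rightarrow> ('p \<Rightarrow> 'n) \<Rightarrow> bool" where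
  "pure_nash V L E len A w pen z \<longleftrightarrow>
     (\<forall>i\<in>V. z i \<in> L) \<and>
     (\<forall>i\<in>V. \<forall>x\<in>L. game_cost L E len A w pen i z \<le> game_cost L E len A w pen i (z(i := x)))"

end

theory Submission
  imports Defs
begin

lemma is_walk_append: "is_walk E (xs @ a # ys) \<longleftrightarrow> is_walk E (xs @ [a]) \<and> is_walk E (a # ys)"
  by (induction xs rule: induct_list012) auto

lemma path_length_append: "path_length len (xs @ a # ys) = path_length len (xs @ [a]) + path_length len (a # ys)"
  by (induction xs rule: induct_list012) auto

lemma is_walk_rev: assumes "\<forall>u v. (u,v)\<in>E \<longrightarrow> (v,u)\<in>E" shows "is_walk E p \<Longrightarrow> is_walk E (rev p)"
proof (induction p rule: induct_list012)
  case (3 x y xs)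
  then show ?case using assms is_walk_append[of E "rev xs" y "[x]"] by auto
qed auto

lemma path_length_rev: assumes "\<forall>u v. (u,v)\<in>E \<longrightarrow> len u v = len v u"
  shows "is_walk E p \<Longrightarrow> path_length len (rev p) = path_length len p"
proof (induction p rule: induct_list012)
  case (3 x y xs)
  then have "len y x = len x y" using assms by (metis is_walk.simps(3))
  then show ?case using 3 path_length_append[of len "rev xs" y "[x]"] by simp
qed auto

lemma walk_nonneg: assumes "\<forall>u v. (u,v)\<in>E \<longrightarrow> len u v > 0"
  shows "is_walk E p \<Longrightarrow> path_length len p \<ge> 0"
proof (induction p rule: induct_list012)
  case (3 x y xs)
  then show ?case using assms by (simp add: add_nonneg_nonneg less_imp_le)
qed auto

lemma walk_set: assumes "E \<subseteq> L \<times> L" shows "is_walk E p \<Longrightarrow> hd p \<in> L \<Longrightarrow> set p \<subseteq> L"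
  by (induction p rule: induct_list012) (use assms in auto)

lemma lcp: "p \<noteq> [] \<Longrightarrow> q \<noteq> [] \<Longrightarrow> hd p = hd q \<Longrightarrow>
  \<exists>A a P Q. p = A@a#P \<and> q = A@a#Q \<and> (P=[] \<or> Q=[] \<or> hd P \<noteq> hd Q)"
proof (induction p arbitrary: q)
  case Nil then show ?case by simp
next
  case (Cons x p)
  then obtain q' where q: "q = x # q'" by (cases q) auto
  show ?case
  proof (cases "p = [] \<or> q' = [] \<or> hd p \<noteq> hd q'")
    case True
    then show ?thesis using q by (intro exI[of _ "[]"]) auto
  next
    case False
    then obtain A a P Q where "p = A@a#P" "q' = A@a#Q" "(P=[] \<or> Q=[] \<or> hd P \<noteq> hd Q)"
      using Cons.IH[of q'] by auto
    then show ?thesis using q by (intro exI[of _ "x#A"]) auto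
  qed
qed

locale wt =
  fixes L :: "'n set" and E :: "('n \<times> 'n) set" and len :: "'n \<Rightarrow> 'n \<Rightarrow> real" and r :: 'n
  assumes WT: "weighted_tree L E len" and rL: "r \<in> L"
begin

abbreviation d where "d \<equiv> tree_dist E len"

lemma finL: "finite L" using WT unfolding weighted_tree_def by auto
lemma EL: "E \<subseteq> L \<times> L" using WT unfolding weighted_tree_def by auto
lemma Esym: "\<forall>u v. (u,v)\<in>E \<longrightarrow> (v,u)\<in>E" using WT unfolding weighted_tree_def by auto
lemma Eirr: "(u,v)\<in>E \<Longrightarrow> u \<noteq> v" using WT unfolding weighted_tree_def by auto
lemma lenpos: "\<forall>u v. (u,v)\<in>E \<longrightarrow> len u v > 0" using WT unfolding weighted_tree_def by auto
lemma lensym: "\<forall>u v. (u,v)\<in>E \<longrightarrow> len u v = len v u" using WT unfolding weighted_tree_def by auto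
lemma uniq: "u \<in> L \<Longrightarrow> v \<in> L \<Longrightarrow> \<exists>!p. simple_path E u v p"
  using WT unfolding weighted_tree_def by auto

definition tp where "tp u v = (THE p. simple_path E u v p)"

lemma sp_set: "simple_path E u v p \<Longrightarrow> u \<in> L \<Longrightarrow> set p \<subseteq> L"
  unfolding simple_path_def using walk_set[OF EL] by blast

lemma sp_ne: "simple_path E u v p \<Longrightarrow> p \<noteq> []"
  unfolding simple_path_def by (cases p) auto

lemma sp_last: "simple_path E u v p \<Longrightarrow> u \<in> L \<Longrightarrow> v \<in> L"
  using sp_set sp_ne unfolding simple_path_def by (metis last_in_set subsetD)

lemma tp: "u \<in> L \<Longrightarrow> v \<in> L \<Longrightarrow> simple_path E u v (tp u v)"
  unfolding tp_def using uniq by (metis theI')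

lemma tp_eq: "u \<in> L \<Longrightarrow> simple_path E u v p \<Longrightarrow> tp u v = p"
  using tp uniq sp_last by blast

lemma dist_tp: "u \<in> L \<Longrightarrow> v \<in> L \<Longrightarrow> d u v = path_length len (tp u v)"
proof -
  assume a: "u \<in> L" "v \<in> L"
  have "{p. simple_path E u v p} = {tp u v}" using tp[OF a] tp_eq[OF a(1)] by blast
  then show ?thesis unfolding tree_dist_def by simp
qed

lemma tp_props: assumes "u \<in> L" "v \<in> L"
  shows "is_walk E (tp u v)" "distinct (tp u v)" "hd (tp u v) = u" "last (tp u v) = v"
    "tp u v \<noteq> []" "set (tp u v) \<subseteq> L"
  using tp[OF assms] sp_ne sp_set assms unfolding simple_path_def by auto

lemma d_nonneg: "u \<in> L \<Longrightarrow> v \<in> L \<Longrightarrow> d u v \<ge> 0"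
  using dist_tp tp_props walk_nonneg[OF lenpos] by simp

lemma tp_refl: "u \<in> L \<Longrightarrow> tp u u = [u]"
  by (rule tp_eq) (auto simp: simple_path_def)

lemma d_refl: "u \<in> L \<Longrightarrow> d u u = 0"
  using dist_tp tp_refl by simp

lemma tp_sym: assumes "u \<in> L" "v \<in> L" shows "tp v u = rev (tp u v)"
proof (rule tp_eq[OF assms(2)])
  show "simple_path E v u (rev (tp u v))"
    using tp_props[OF assms] is_walk_rev[OF Esym]
    by (simp add: simple_path_def hd_rev last_rev)
qed

lemma d_sym: assumes "u \<in> L" "v \<in> L" shows "d v u = d u v"
proof -
  have "d v u = path_length len (rev (tp u v))" using dist_tp[OF assms(2,1)] tp_sym[OF assms] by simp
  also have "\<dots> = d u v" using dist_tp[OF assms] path_length_rev[OF lensym tp_props(1)[OF assms]] by simp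
  finally show ?thesis .
qed

lemma tp_edge: "(u,v) \<in> E \<Longrightarrow> tp u v = [u,v]"
  using EL Eirr by (intro tp_eq) (auto simp: simple_path_def)

lemma d_edge: "(u,v) \<in> E \<Longrightarrow> d u v = len u v"
  using EL dist_tp tp_edge by auto

lemma tp_split: assumes "u \<in> L" "v \<in> L" "tp u v = xs @ a # ys"
  shows "tp u a = xs @ [a]" "tp a v = a # ys" "a \<in> L"
proof -
  note P = tp_props[OF assms(1,2)]
  show aL: "a \<in> L" using P(6) assms(3) by auto
  show "tp u a = xs @ [a]"
    apply (rule tp_eq[OF assms(1)])
    using P assms(3) is_walk_append[of E xs a ys] by (cases xs) (auto simp: simple_path_def)
  show "tp a v = a # ys"
    apply (rule tp_eq[OF aL])
    using P assms(3) is_walk_append[of E xs a ys] by (auto simp: simple_path_def)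
qed

lemma d_split: assumes "u \<in> L" "v \<in> L" "a \<in> set (tp u v)"
  shows "d u v = d u a + d a v"
proof -
  obtain xs ys where e: "tp u v = xs @ a # ys" using assms(3) split_list by metis
  note s = tp_split[OF assms(1,2) e]
  show ?thesis using dist_tp assms s e path_length_append by simp
qed

lemma meet: assumes "s \<in> L" "y \<in> L" "x \<in> L"
  shows "\<exists>A a P Q. tp s y = A@a#P \<and> tp s x = A@a#Q \<and> set P \<inter> set Q = {} \<and> tp y x = rev P @ a # Q"
proof -
  note Py = tp_props[OF assms(1,2)] and Px = tp_props[OF assms(1,3)]
  obtain A a P Q where e: "tp s y = A@a#P" "tp s x = A@a#Q" and h: "(P=[] \<or> Q=[] \<or> hd P \<noteq> hd Q)"
    using lcp[of "tp s y" "tp s x"] Py Px by auto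
  have disj: "set P \<inter> set Q = {}"
  proof (rule ccontr)
    assume "set P \<inter> set Q \<noteq> {}"
    then obtain u where u: "u \<in> set P" "u \<in> set Q" by blast
    obtain P1 P2 where p: "P = P1 @ u # P2" using u(1) split_list by metis
    obtain Q1 Q2 where q: "Q = Q1 @ u # Q2" using u(2) split_list by metis
    have "tp s u = (A@a#P1) @ [u]" using tp_split(1)[OF assms(1,2), of "A@a#P1" u P2] e p by simp
    moreover have "tp s u = (A@a#Q1) @ [u]" using tp_split(1)[OF assms(1,3), of "A@a#Q1" u Q2] e q by simp
    ultimately have "P1 = Q1" by simp
    then show False using h p q by (cases P1) auto
  qed
  have w1: "is_walk E (a#P)" and w2: "is_walk E (a#Q)"
    using Py(1) Px(1) e is_walk_append by metis+
  have "is_walk E (rev P @ [a])" using is_walk_rev[OF Esym w1] by simp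
  then have w: "is_walk E (rev P @ a # Q)" using w2 is_walk_append by metis
  have dist: "distinct (rev P @ a # Q)" using Py(2) Px(2) e disj by auto
  have hd: "hd (rev P @ a # Q) = y"
  proof (cases P)
    case Nil then show ?thesis using Py(4) e by simp
  next
    case (Cons b P') then show ?thesis using Py(4) e by (simp add: hd_append hd_rev split: if_splits)
  qed
  have lst: "last (rev P @ a # Q) = x" using Px(4) e by simp
  have "tp y x = rev P @ a # Q"
    by (rule tp_eq[OF assms(2)]) (use w dist hd lst in \<open>simp add: simple_path_def\<close>)
  then show ?thesis using e disj by blast
qed

lemma triangle: assumes "y \<in> L" "x \<in> L" "s \<in> L" shows "d y x \<le> d y s + d s x"
proof -
  obtain A a P Q where e: "tp s y = A@a#P" "tp s x = A@a#Q" "tp y x = rev P @ a # Q"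
    using meet[OF assms(3,1,2)] by blast
  have aL: "a \<in> L" using tp_props(6)[OF assms(3,1)] e by auto
  have 1: "d y x = d y a + d a x" using d_split[OF assms(1,2)] e by simp
  have 2: "d s y = d s a + d a y" using d_split[OF assms(3,1)] e by simp
  have 3: "d s x = d s a + d a x" using d_split[OF assms(3,2)] e by simp
  show ?thesis using 1 2 3 d_sym[OF assms(1) aL] d_sym[OF assms(1,3)] d_nonneg[OF assms(3) aL] by simp
qed

end

context wt begin

definition Sub where "Sub q = {u \<in> L. q \<in> set (tp r u)}"

lemma child: assumes "tree_child E r z c" shows "z \<in> L" "c \<in> L" "tp r c = tp r z @ [c]"
proof -
  obtain p where e: "(z,c) \<in> E" "simple_path E r c p" "z \<in> set p"
    using assms unfolding tree_child_def by blast
  show zL: "z \<in> L" and cL: "c \<in> L" using e(1) EL by auto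
  have p: "tp r c = p" using tp_eq[OF rL e(2)] .
  obtain xs ys where s: "p = xs @ z # ys" using e(3) split_list by metis
  have "tp r z = xs @ [z]" "tp z c = z # ys" using tp_split[OF rL cL, of xs z ys] p s by auto
  moreover have "tp z c = [z,c]" using tp_edge[OF e(1)] .
  ultimately show "tp r c = tp r z @ [c]" using p s by simp
qed

lemma Sub_r: "Sub r = L"
proof -
  have "r \<in> set (tp r u)" if "u \<in> L" for u
    using tp_props(3,5)[OF rL that] hd_in_set by metis
  then show ?thesis unfolding Sub_def by auto
qed

lemma child_mono: "tree_child E r z c \<Longrightarrow> z \<in> Sub q \<Longrightarrow> c \<in> Sub q"
  using child unfolding Sub_def by auto

lemma child_notin: "tree_child E r z c \<Longrightarrow> z \<notin> Sub c"
proof -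
  assume a: "tree_child E r z c"
  have "distinct (tp r z @ [c])" using child[OF a] tp_props(2)[OF rL] by metis
  then show ?thesis unfolding Sub_def by auto
qed

lemma child_in: "tree_child E r z c \<Longrightarrow> c \<in> Sub c"
  using child unfolding Sub_def by auto

lemma child_len: "tree_child E r z c \<Longrightarrow> length (tp r c) = Suc (length (tp r z))"
  using child by simp

lemma tp_len_le: "u \<in> L \<Longrightarrow> length (tp r u) \<le> card L"
  using tp_props[OF rL] finL by (metis card_mono distinct_card)

lemma tp_len_r: "length (tp r r) = 1"
  using tp_refl[OF rL] by simp

lemma SEPR: assumes "y \<in> Sub q" "x \<in> L" "x \<notin> Sub q" shows "q \<in> set (tp y x)"
proof -
  have yL: "y \<in> L" using assms(1) unfolding Sub_def by auto
  obtain A a P Q where e: "tp r y = A@a#P" "tp r x = A@a#Q" "tp y x = rev P @ a # Q"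
    using meet[OF rL yL assms(2)] by blast
  have "q \<in> set (tp r y)" "q \<notin> set (tp r x)" using assms unfolding Sub_def by auto
  then show ?thesis using e by auto
qed

lemma SEPR2: assumes "tree_child E r z c" "y \<in> L" "y \<notin> Sub c" shows "z \<in> set (tp y c)"
proof -
  note ch = child[OF assms(1)]
  obtain A a P Q where e: "tp r y = A@a#P" "tp r c = A@a#Q" "tp y c = rev P @ a # Q"
    using meet[OF rL assms(2) ch(2)] by blast
  have "c \<notin> set (tp r y)" using assms unfolding Sub_def by auto
  then have cn: "c \<notin> set A" "c \<noteq> a" using e by auto
  have lc: "last (A@a#Q) = c" by (metis e(2) ch(3) last_snoc)
  have "Q \<noteq> []" proof assume "Q = []" then show False using lc cn by simp qed
  then have "Q = butlast Q @ [last Q]" by simp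
  moreover have "last Q = c" using lc \<open>Q \<noteq> []\<close> by simp
  ultimately obtain Q' where Q': "Q = Q' @ [c]" by metis
  have "tp r z = A @ a # Q'" using e(2) ch(3) Q' by simp
  then have "z = last (a # Q')" using tp_props[OF rL ch(1)] by simp
  then have "z \<in> set (a # Q')" using last_in_set by blast
  then show ?thesis using e Q' by auto
qed

lemma desc: assumes "x \<in> Sub z" "x \<noteq> z" shows "\<exists>c. tree_child E r z c \<and> x \<in> Sub c"
proof -
  have xL: "x \<in> L" and zx: "z \<in> set (tp r x)" using assms unfolding Sub_def by auto
  obtain xs ys where s: "tp r x = xs @ z # ys" using zx split_list by metis
  have "ys \<noteq> []" using s tp_props(4)[OF rL xL] assms(2) by auto
  then obtain c ys' where ys: "ys = c # ys'" by (cases ys) auto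
  have s2: "tp r x = (xs @ [z]) @ c # ys'" using s ys by simp
  have tc: "tp r c = xs @ [z, c]" using tp_split(1)[OF rL xL s2] by simp
  have cL: "c \<in> L" using tp_split(3)[OF rL xL s2] .
  have zL: "z \<in> L" using tp_split(3)[OF rL xL s] .
  have "is_walk E (tp z x)" using tp_props(1)[OF zL xL] .
  then have "is_walk E (z # c # ys')" using tp_split(2)[OF rL xL s] ys by simp
  then have "(z,c) \<in> E" by simp
  then have "tree_child E r z c" unfolding tree_child_def using tp[OF rL cL] tc by auto
  moreover have "x \<in> Sub c" using xL s2 unfolding Sub_def by auto
  ultimately show ?thesis by blast
qed

lemma PW_A: assumes "tree_child E r z c" "y \<in> L"
  shows "d y c - d y z = (if y \<in> Sub c then - len z c else len z c)"
proof -
  note ch = child[OF assms(1)]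
  have E: "(z,c) \<in> E" using assms(1) unfolding tree_child_def by auto
  show ?thesis
  proof (cases "y \<in> Sub c")
    case True
    have "c \<in> set (tp y z)" using SEPR[OF True ch(1) child_notin[OF assms(1)]] .
    then have "d y z = d y c + d c z" using d_split[OF assms(2) ch(1)] by simp
    moreover have "d c z = len z c" using d_edge E Esym lensym by metis
    ultimately show ?thesis using True by simp
  next
    case False
    have "z \<in> set (tp y c)" using SEPR2[OF assms False] .
    then have "d y c = d y z + d z c" using d_split[OF assms(2) ch(2)] by simp
    moreover have "d z c = len z c" using d_edge E by metis
    ultimately show ?thesis using False by simp
  qed
qed

lemma PW_B: assumes "tree_child E r z c" "x \<in> Sub c" "y \<in> L"
  shows "d y x - d y z \<ge> (if y \<in> Sub c then - d z x else d z x)"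
proof -
  note ch = child[OF assms(1)]
  have xL: "x \<in> L" using assms(2) unfolding Sub_def by auto
  show ?thesis
  proof (cases "y \<in> Sub c")
    case True
    then show ?thesis using triangle[OF assms(3) ch(1) xL] d_sym[OF xL ch(1)] by simp
  next
    case False
    have 1: "d x y = d x c + d c y" using d_split[OF xL assms(3)] SEPR[OF assms(2) assms(3) False] by simp
    have 2: "d y c = d y z + d z c" using d_split[OF assms(3) ch(2)] SEPR2[OF assms(1) assms(3) False] by simp
    have 3: "d x z = d x c + d c z"
      using d_split[OF xL ch(1)] SEPR[OF assms(2) ch(1) child_notin[OF assms(1)]] by simp
    show ?thesis using False 1 2 3 d_sym[OF xL assms(3)] d_sym[OF ch(2) assms(3)] d_sym[OF ch(1,2)] d_sym[OF xL ch(1)]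
      by simp
  qed
qed

lemma PW_C: assumes "z \<in> L" "x \<in> L" "x \<notin> Sub z" "y \<in> L"
  shows "d y x - d y z \<ge> (if y \<in> Sub z then d z x else - d z x)"
proof (cases "y \<in> Sub z")
  case True
  then show ?thesis using d_split[OF assms(4,2)] SEPR[OF True assms(2,3)] by simp
next
  case False
  then show ?thesis using triangle[OF assms(4) assms(1) assms(2)] d_sym[OF assms(2,1)] by simp
qed

end

lemma sum_if_id: "(\<Sum>k\<in>K. m k * (if P k then -D else D)) = (D::real) * ((\<Sum>k\<in>K. m k) - 2 * (\<Sum>k\<in>K. if P k then m k else 0))"
proof -
  have "m k * (if P k then -D else D) = D * m k - 2 * (D * (if P k then m k else 0))" for k by auto
  then show ?thesis by (simp add: sum_subtractf sum_distrib_left[symmetric] right_diff_distrib)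
qed

lemma sum_if_ge: assumes "\<forall>k\<in>K. m k \<ge> 0" "\<forall>k\<in>K. g k \<ge> (if P k then -D else D)"
  shows "(\<Sum>k\<in>K. m k * g k) \<ge> (D::real) * ((\<Sum>k\<in>K. m k) - 2 * (\<Sum>k\<in>K. if P k then m k else 0))"
proof -
  have "(\<Sum>k\<in>K. m k * (if P k then -D else D)) \<le> (\<Sum>k\<in>K. m k * g k)"
    using assms by (intro sum_mono mult_left_mono) auto
  then show ?thesis using sum_if_id[of m P D K] by simp
qed

context wt begin

lemma GA: assumes "tree_child E r z c" "\<forall>k\<in>K. pt k \<in> L"
  shows "(\<Sum>k\<in>K. m k * d (pt k) c) - (\<Sum>k\<in>K. m k * d (pt k) z)
     = len z c * ((\<Sum>k\<in>K. m k) - 2 * (\<Sum>k\<in>K. if pt k \<in> Sub c then m k else 0))"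
proof -
  have "(\<Sum>k\<in>K. m k * d (pt k) c) - (\<Sum>k\<in>K. m k * d (pt k) z) = (\<Sum>k\<in>K. m k * (d (pt k) c - d (pt k) z))"
    by (simp add: sum_subtractf right_diff_distrib)
  also have "\<dots> = (\<Sum>k\<in>K. m k * (if pt k \<in> Sub c then - len z c else len z c))"
    using PW_A[OF assms(1)] assms(2) by (intro sum.cong) auto
  finally show ?thesis using sum_if_id by simp
qed

lemma GB: assumes "tree_child E r z c" "x \<in> Sub c" "\<forall>k\<in>K. pt k \<in> L" "\<forall>k\<in>K. m k \<ge> 0"
  shows "(\<Sum>k\<in>K. m k * d (pt k) x) - (\<Sum>k\<in>K. m k * d (pt k) z)
     \<ge> d z x * ((\<Sum>k\<in>K. m k) - 2 * (\<Sum>k\<in>K. if pt k \<in> Sub c then m k else 0))"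
proof -
  have "(\<Sum>k\<in>K. m k * d (pt k) x) - (\<Sum>k\<in>K. m k * d (pt k) z) = (\<Sum>k\<in>K. m k * (d (pt k) x - d (pt k) z))"
    by (simp add: sum_subtractf right_diff_distrib)
  then show ?thesis using sum_if_ge[OF assms(4), where g="\<lambda>k. d (pt k) x - d (pt k) z" and P="\<lambda>k. pt k \<in> Sub c" and D="d z x"]
    PW_B[OF assms(1,2)] assms(3) by simp
qed

lemma GC: assumes "z \<in> L" "x \<in> L" "x \<notin> Sub z" "\<forall>k\<in>K. pt k \<in> L" "\<forall>k\<in>K. m k \<ge> 0"
  shows "(\<Sum>k\<in>K. m k * d (pt k) x) - (\<Sum>k\<in>K. m k * d (pt k) z)
     \<ge> (- d z x) * ((\<Sum>k\<in>K. m k) - 2 * (\<Sum>k\<in>K. if pt k \<in> Sub z then m k else 0))"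
proof -
  have "(\<Sum>k\<in>K. m k * d (pt k) x) - (\<Sum>k\<in>K. m k * d (pt k) z) = (\<Sum>k\<in>K. m k * (d (pt k) x - d (pt k) z))"
    by (simp add: sum_subtractf right_diff_distrib)
  moreover have "\<forall>k\<in>K. d (pt k) x - d (pt k) z \<ge> (if pt k \<in> Sub z then - (- d z x) else - d z x)"
    using PW_C[OF assms(1,2,3)] assms(4) by (metis minus_minus)
  ultimately show ?thesis using sum_if_ge[OF assms(5), where g="\<lambda>k. d (pt k) x - d (pt k) z" and P="\<lambda>k. pt k \<in> Sub z" and D="- d z x"]
    by simp
qed

end

locale game = wt L E len r for L :: "'n set" and E len r +
  fixes V :: "'p set" and A :: "('p \<times> 'p) set" and w :: "'p \<Rightarrow> 'p \<Rightarrow> real" and pen :: "'p \<Rightarrow> 'n \<Rightarrow> real"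
  assumes finV: "finite V" and AV: "A \<subseteq> V \<times> V" and wpos: "\<forall>i j. (i, j) \<in> A \<longrightarrow> w i j \<ge> 0"
    and penpos: "\<forall>i\<in>V. \<forall>v\<in>L. pen i v \<ge> 0"
begin

definition "N i = {j. (i,j) \<in> A} - {i}"
definition "Fc z i x = (\<Sum>v\<in>L. pen i v * d v x) + (\<Sum>j\<in>N i. w i j * d (z j) x)"
definition "mu z i S = (\<Sum>v\<in>L. if v \<in> S then pen i v else 0) + (\<Sum>j\<in>N i. if z j \<in> S then w i j else 0)"
definition "Wt i = (\<Sum>v\<in>L. pen i v) + (\<Sum>j\<in>N i. w i j)"
definition "INV z \<longleftrightarrow> (\<forall>i\<in>V. z i \<in> L) \<and> (\<forall>i\<in>V. Wt i \<le> 2 * mu z i (Sub (z i)))"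
definition "Phi z = (\<Sum>i\<in>V. length (tp r (z i)))"
abbreviation "step \<equiv> algo_step V L E len A w pen r"
abbreviation "gc \<equiv> game_cost L E len A w pen"

lemma N_sub: "N i \<subseteq> V" using AV unfolding N_def by auto
lemma finN: "finite (N i)" using N_sub finV finite_subset by blast
lemma Nw: "j \<in> N i \<Longrightarrow> w i j \<ge> 0" using wpos unfolding N_def by auto

lemma cost_eq: assumes "x \<in> L" "\<forall>j\<in>V. z j \<in> L"
  shows "gc i (z(i:=x)) = Fc z i x"
proof -
  let ?M = "{j. (i,j) \<in> A}"
  have finM: "finite ?M" using AV finV by (metis (no_types, lifting) finite_SigmaI finite_subset mem_Collect_eq mem_Sigma_iff subsetI subset_iff)
  have 1: "(\<Sum>j\<in>?M. w i j * d x ((z(i:=x)) j)) = (\<Sum>j\<in>N i. w i j * d x ((z(i:=x)) j))"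
  proof (cases "i \<in> ?M")
    case True
    then show ?thesis using sum.remove[OF finM True, of "\<lambda>j. w i j * d x ((z(i:=x)) j)"] d_refl[OF assms(1)]
      unfolding N_def by simp
  next
    case False
    then have "?M = N i" unfolding N_def by auto
    then show ?thesis by simp
  qed
  have 2: "(\<Sum>j\<in>N i. w i j * d x ((z(i:=x)) j)) = (\<Sum>j\<in>N i. w i j * d (z j) x)"
  proof (intro sum.cong refl)
    fix j assume j: "j \<in> N i"
    then have "j \<noteq> i" "z j \<in> L" using N_sub assms(2) unfolding N_def by auto
    then show "w i j * d x ((z(i:=x)) j) = w i j * d (z j) x" using d_sym[OF _ assms(1)] by simp
  qed
  show ?thesis unfolding game_cost_def Fc_def using 1 2 by simp
qed

lemma cost_eq0: assumes "\<forall>j\<in>V. z j \<in> L" "i \<in> V" shows "gc i z = Fc z i (z i)"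
  using cost_eq[OF _ assms(1), of "z i" i] assms by simp

lemma FA: assumes "tree_child E r u c" "\<forall>j\<in>V. z j \<in> L"
  shows "Fc z i c - Fc z i u = len u c * (Wt i - 2 * mu z i (Sub c))"
proof -
  have a: "\<forall>j\<in>N i. z j \<in> L" using assms(2) N_sub by auto
  show ?thesis
    using GA[OF assms(1), of L id "pen i"] GA[OF assms(1) a, of "w i"]
    unfolding Fc_def mu_def Wt_def by (simp add: algebra_simps)
qed

lemma FB: assumes "tree_child E r u c" "x \<in> Sub c" "\<forall>j\<in>V. z j \<in> L" "i \<in> V"
  shows "Fc z i x - Fc z i u \<ge> d u x * (Wt i - 2 * mu z i (Sub c))"
proof -
  have a: "\<forall>j\<in>N i. z j \<in> L" using assms(3) N_sub by auto
  show ?thesis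
    using GB[OF assms(1,2), of L id "pen i"] GB[OF assms(1,2) a, of "w i"] penpos assms(4) Nw
    unfolding Fc_def mu_def Wt_def by (simp add: algebra_simps)
qed

lemma FC: assumes "u \<in> L" "x \<in> L" "x \<notin> Sub u" "\<forall>j\<in>V. z j \<in> L" "i \<in> V"
  shows "Fc z i x - Fc z i u \<ge> (- d u x) * (Wt i - 2 * mu z i (Sub u))"
proof -
  have a: "\<forall>j\<in>N i. z j \<in> L" using assms(4) N_sub by auto
  show ?thesis
    using GC[OF assms(1,2,3), of L id "pen i"] GC[OF assms(1,2,3) a, of "w i"] penpos assms(5) Nw
    unfolding Fc_def mu_def Wt_def by (simp add: algebra_simps)
qed

end

context game begin

lemma Wt_nonneg: "i \<in> V \<Longrightarrow> Wt i \<ge> 0"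
  unfolding Wt_def using penpos Nw by (intro add_nonneg_nonneg sum_nonneg) auto

lemma INV_init: "INV (\<lambda>_. r)"
proof -
  have "mu (\<lambda>_. r) i (Sub r) = Wt i" for i
    unfolding mu_def Wt_def Sub_r using rL by simp
  then show ?thesis unfolding INV_def using rL Wt_nonneg by auto
qed

lemma mu_mono: assumes "tree_child E r (z k) c" "k \<in> V"
  shows "mu z i (Sub q) \<le> mu (z(k:=c)) i (Sub q)"
proof -
  have "(\<Sum>j\<in>N i. if z j \<in> Sub q then w i j else 0) \<le> (\<Sum>j\<in>N i. if (z(k:=c)) j \<in> Sub q then w i j else 0)"
  proof (intro sum_mono)
    fix j assume j: "j \<in> N i"
    show "(if z j \<in> Sub q then w i j else 0) \<le> (if (z(k:=c)) j \<in> Sub q then w i j else 0)"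
      using child_mono[OF assms(1)] Nw[OF j] by auto
  qed
  then show ?thesis unfolding mu_def by simp
qed

lemma mu_self: "mu (z(k:=c)) k S = mu z k S"
  unfolding mu_def N_def by (intro arg_cong2[where f="(+)"] refl sum.cong) auto

lemma INV_step: assumes "INV z" "step z z'" shows "INV z' \<and> Phi z' = Suc (Phi z)"
proof -
  obtain k c where k: "k \<in> V" "tree_child E r (z k) c" "gc k (z(k := c)) < gc k z" "z' = z(k := c)"
    using assms(2) unfolding algo_step_def by blast
  have zL: "\<forall>j\<in>V. z j \<in> L" using assms(1) unfolding INV_def by auto
  note ch = child[OF k(2)]
  have z'L: "\<forall>j\<in>V. z' j \<in> L" using zL ch k(4) by auto
  have "Fc z k c < Fc z k (z k)" using k(3) cost_eq[OF ch(2) zL] cost_eq0[OF zL k(1)] by simp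
  moreover have "Fc z k c - Fc z k (z k) = len (z k) c * (Wt k - 2 * mu z k (Sub c))" using FA[OF k(2) zL] .
  moreover have "len (z k) c > 0" using lenpos k(2) unfolding tree_child_def by auto
  ultimately have "len (z k) c * (Wt k - 2 * mu z k (Sub c)) < 0" "len (z k) c > 0" by linarith+
  then have "Wt k - 2 * mu z k (Sub c) < 0" by (simp add: mult_less_0_iff)
  then have Ik: "Wt k \<le> 2 * mu z' k (Sub (z' k))" using k(4) mu_self by simp
  have "Wt i \<le> 2 * mu z' i (Sub (z' i))" if i: "i \<in> V" for i
  proof (cases "i = k")
    case True then show ?thesis using Ik by simp
  next
    case False
    then have "z' i = z i" using k(4) by simp
    have "Wt i \<le> 2 * mu z i (Sub (z i))" using assms(1) i unfolding INV_def by blast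
    moreover have "mu z i (Sub (z i)) \<le> mu z' i (Sub (z i))" using mu_mono[where z=z and k=k and c=c and i=i and q="z i", OF k(2,1)] k(4) by simp
    ultimately show ?thesis using \<open>z' i = z i\<close> by simp
  qed
  then have I: "INV z'" using z'L unfolding INV_def by auto
  have "Phi z' = length (tp r (z' k)) + (\<Sum>i\<in>V-{k}. length (tp r (z' i)))"
    unfolding Phi_def using sum.remove[OF finV k(1), of "\<lambda>i. length (tp r (z' i))"] by simp
  also have "\<dots> = Suc (length (tp r (z k))) + (\<Sum>i\<in>V-{k}. length (tp r (z i)))"
    using k(4) child_len[OF k(2)] by simp
  also have "\<dots> = Suc (Phi z)"
    unfolding Phi_def using sum.remove[OF finV k(1), of "\<lambda>i. length (tp r (z i))"] by simp
  finally show ?thesis using I by simp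
qed

lemma reach: "(step ^^ n) (\<lambda>_. r) z \<Longrightarrow> INV z \<and> Phi z = card V + n"
proof (induction n arbitrary: z)
  case 0
  then have "z = (\<lambda>_. r)" by simp
  then show ?case using INV_init tp_len_r unfolding Phi_def by simp
next
  case (Suc n)
  from Suc.prems obtain y where "(step ^^ n) (\<lambda>_. r) y" "step y z" by (rule relpowp_Suc_E)
  then show ?case using Suc.IH INV_step by fastforce
qed

lemma Phi_le: "INV z \<Longrightarrow> Phi z \<le> card V * card L"
proof -
  assume "INV z"
  then have "\<forall>i\<in>V. length (tp r (z i)) \<le> card L" unfolding INV_def using tp_len_le by blast
  then have "(\<Sum>i\<in>V. length (tp r (z i))) \<le> card V * card L"
    using sum_bounded_above[of V "\<lambda>i. length (tp r (z i))" "card L"] by simp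
  then show ?thesis unfolding Phi_def .
qed

lemma bound: "(step ^^ n) (\<lambda>_. r) z \<Longrightarrow> n \<le> card V * card L"
  using reach Phi_le by fastforce

lemma nash: assumes "INV z" "\<not> (\<exists>z'. step z z')" shows "pure_nash V L E len A w pen z"
proof -
  have zL: "\<forall>j\<in>V. z j \<in> L" using assms(1) unfolding INV_def by auto
  have "gc i z \<le> gc i (z(i := x))" if i: "i \<in> V" and x: "x \<in> L" for i x
  proof -
    have ziL: "z i \<in> L" using zL i by auto
    have ch: "2 * mu z i (Sub c) \<le> Wt i" if c: "tree_child E r (z i) c" for c
    proof (rule ccontr)
      assume "\<not> ?thesis"
      moreover have "Fc z i c - Fc z i (z i) = len (z i) c * (Wt i - 2 * mu z i (Sub c))" using FA[OF c zL] .
      moreover have "len (z i) c > 0" using lenpos c unfolding tree_child_def by auto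
      ultimately have "len (z i) c * (Wt i - 2 * mu z i (Sub c)) < 0" "Fc z i c - Fc z i (z i) = len (z i) c * (Wt i - 2 * mu z i (Sub c))"
        by (simp_all add: mult_pos_neg)
      then have "Fc z i c < Fc z i (z i)" by linarith
      then have "gc i (z(i:=c)) < gc i z" using cost_eq[OF child(2)[OF c] zL] cost_eq0[OF zL i] by simp
      then have "step z (z(i:=c))" unfolding algo_step_def using i c by blast
      then show False using assms(2) by blast
    qed
    have "Fc z i (z i) \<le> Fc z i x"
    proof (cases "x = z i")
      case True then show ?thesis by simp
    next
      case ne: False
      show ?thesis
      proof (cases "x \<in> Sub (z i)")
        case True
        then obtain c where c: "tree_child E r (z i) c" "x \<in> Sub c" using desc ne by blast
        have "Fc z i x - Fc z i (z i) \<ge> d (z i) x * (Wt i - 2 * mu z i (Sub c))" using FB[OF c zL i] .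
        moreover have "d (z i) x * (Wt i - 2 * mu z i (Sub c)) \<ge> 0"
          using ch[OF c(1)] d_nonneg[OF ziL x] by simp
        ultimately show ?thesis by simp
      next
        case False
        have "Fc z i x - Fc z i (z i) \<ge> (- d (z i) x) * (Wt i - 2 * mu z i (Sub (z i)))" using FC[OF ziL x False zL i] .
        moreover have "(- d (z i) x) * (Wt i - 2 * mu z i (Sub (z i))) \<ge> 0"
          using assms(1) i d_nonneg[OF ziL x] unfolding INV_def by (intro mult_nonpos_nonpos) auto
        ultimately show ?thesis by simp
      qed
    qed
    then show ?thesis using cost_eq[OF x zL] cost_eq0[OF zL i] by simp
  qed
  then show ?thesis unfolding pure_nash_def using zL by blast
qed

lemma main: "(\<forall>n z. (step ^^ n) (\<lambda>_. r) z \<longrightarrow> n \<le> card V * card L)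
       \<and> (\<forall>z. step\<^sup>*\<^sup>* (\<lambda>_. r) z \<and> \<not> (\<exists>z'. step z z') \<longrightarrow> pure_nash V L E len A w pen z)
       \<and> (\<exists>z. pure_nash V L E len A w pen z)"
proof -
  have P1: "\<forall>n z. (step ^^ n) (\<lambda>_. r) z \<longrightarrow> n \<le> card V * card L" using bound by blast
  have P2: "\<forall>z. step\<^sup>*\<^sup>* (\<lambda>_. r) z \<and> \<not> (\<exists>z'. step z z') \<longrightarrow> pure_nash V L E len A w pen z"
  proof (intro allI impI)
    fix z assume a: "step\<^sup>*\<^sup>* (\<lambda>_. r) z \<and> \<not> (\<exists>z'. step z z')"
    then obtain n where "(step ^^ n) (\<lambda>_. r) z" using rtranclp_imp_relpowp by metis
    then have "INV z" using reach by blast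
    then show "pure_nash V L E len A w pen z" using nash a by blast
  qed
  let ?S = "{n. \<exists>z. (step ^^ n) (\<lambda>_. r) z}"
  have "?S \<subseteq> {..card V * card L}" using P1 by blast
  then have fin: "finite ?S" using finite_subset by blast
  have "0 \<in> ?S" by auto
  then have "Max ?S \<in> ?S" using fin Max_in by blast
  then obtain z where z: "(step ^^ Max ?S) (\<lambda>_. r) z" by blast
  have "\<not> (\<exists>z'. step z z')"
  proof
    assume "\<exists>z'. step z z'"
    then obtain z' where "step z z'" by blast
    then have "(step ^^ Suc (Max ?S)) (\<lambda>_. r) z'" by (rule relpowp_Suc_I[OF z])
    then have "Suc (Max ?S) \<in> ?S" by blast
    then have "Suc (Max ?S) \<le> Max ?S" using Max_ge[OF fin] by blast
    then show False by simp
  qed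
  moreover have "step\<^sup>*\<^sup>* (\<lambda>_. r) z" using z by (rule relpowp_imp_rtranclp)
  ultimately have "pure_nash V L E len A w pen z" using P2 by blast
  then show ?thesis using P1 P2 by blast
qed

end

theorem theorem3:
  fixes V :: "'p set" and A :: "('p \<times> 'p) set" and w :: "'p \<Rightarrow> 'p \<Rightarrow> real"
    and L :: "'n set" and E :: "('n \<times> 'n) set" and len :: "'n \<Rightarrow> 'n \<Rightarrow> real"
    and pen :: "'p \<Rightarrow> 'n \<Rightarrow> real" and r :: 'n
  assumes "finite V"
    and "A \<subseteq> V \<times> V"
    and "\<forall>i j. (i, j) \<in> A \<longrightarrow> w i j \<ge> 0"
    and "weighted_tree L E len"
    and "\<forall>i\<in>V. \<forall>v\<in>L. pen i v \<ge> 0"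
    and "r \<in> L"
  shows "(\<forall>n z. (algo_step V L E len A w pen r ^^ n) (\<lambda>_. r) z \<longrightarrow> n \<le> card V * card L)
       \<and> (\<forall>z. (algo_step V L E len A w pen r)\<^sup>*\<^sup>* (\<lambda>_. r) z \<and>
              \<not> (\<exists>z'. algo_step V L E len A w pen r z z') \<longrightarrow> pure_nash V L E len A w pen z)
       \<and> (\<exists>z. pure_nash V L E len A w pen z)"
proof -
  interpret G: game L E len r V A w pen
    by unfold_locales (use assms in auto)
  show ?thesis using G.main .
qed

end
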